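(* Let $a,b\in(0,1)$ and $c_1,c_2>0$ with $ac_1<1$, $ac_2<1$. For every $x,y\in\mathbb Z_{\ge0}$, with all matrix products and series understood entrywise, $$\mathbf M^{\rightarrow}_x[a]\mathbf M^{\downarrow}_y[b]=(ab)^{\min\{x,y\}}(1-ab)\sum_{z\ge\max\{0,y-x\}}\mathbf M^{\downarrow}_z[b]\mathbf M^{\rightarrow}_{x-y+z}[a],$$ $$\mathbf w^t\mathbf M^{\downarrow}_x[a]=(ac_1)^x(1-ac_1)\sum_{y\ge0}\mathbf w^t\mathbf M^{\rightarrow}_y[a],\qquad \mathbf M^{\rightarrow}_x[a]\mathbf v=(ac_2)^x(1-ac_2)\sum_{y\ge0}\mathbf M^{\downarrow}_y[a]\mathbf v.$$
   Context: For $x\in\mathbb Z_{\ge0}$ and $a\in(0,1)$, $\mathbf M^{\rightarrow}_x[a]$ and $\mathbf M^{\downarrow}_x[a]$ are the infinite matrices indexed by $\mathbb Z_{\ge0}\times\mathbb Z_{\ge0}$ with entries $\mathbf M^{\rightarrow}_x[a](n,n')=a^{2x+n-n'}\mathbf 1_{n'\ge x}\mathbf 1_{x+n-n'\ge0}$ and $\mathbf M^{\downarrow}_x[a](n,n')=\mathbf M^{\rightarrow}_x[a](n',n)=a^{2x+n'-n}\mathbf 1_{n\ge x}\mathbf 1_{x+n'-n\ge0}$. The vectors $\mathbf w,\mathbf v\in\mathbb R^{\mathbb Z_{\ge0}}$ are $\mathbf w(n)=c_1^n$, $\mathbf v(n)=c_2^n$. *)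

theory Defs
  imports "HOL-Analysis.Analysis"
begin

definition Mright :: "nat \<Rightarrow> real \<Rightarrow> nat \<Rightarrow> nat \<Rightarrow> real" where
  "Mright x a n n' = (if n' \<ge> x \<and> int x + int n - int n' \<ge> 0
                      then a powi (2 * int x + int n - int n') else 0)"

definition Mdown :: "nat \<Rightarrow> real \<Rightarrow> nat \<Rightarrow> nat \<Rightarrow> real" where
  "Mdown x a n n' = Mright x a n' n"

definition matmul :: "(nat \<Rightarrow> nat \<Rightarrow> real) \<Rightarrow> (nat \<Rightarrow> nat \<Rightarrow> real) \<Rightarrow> nat \<Rightarrow> nat \<Rightarrow> real" where
  "matmul A B n n' = (\<Sum>k. A n k * B k n')"

definition vecmat :: "(nat \<Rightarrow> real) \<Rightarrow> (nat \<Rightarrow> nat \<Rightarrow> real) \<Rightarrow> nat \<Rightarrow> real" where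
  "vecmat w A n' = (\<Sum>n. w n * A n n')"

definition matvec :: "(nat \<Rightarrow> nat \<Rightarrow> real) \<Rightarrow> (nat \<Rightarrow> real) \<Rightarrow> nat \<Rightarrow> real" where
  "matvec A v n = (\<Sum>n'. A n n' * v n')"

end

theory Submission
  imports Defs
begin


lemma Mright_eq: "Mright x a n n' = (if x \<le> n' \<and> n' \<le> x + n then a ^ (2*x+n-n') else 0)"
proof (cases "x \<le> n' \<and> n' \<le> x + n")
  case True
  then have "2 * int x + int n - int n' = int (2*x+n-n')" by auto
  then show ?thesis using True unfolding Mright_def by (simp del: of_nat_diff)
next
  case False then show ?thesis unfolding Mright_def by auto
qed

lemma geom_shift:
  fixes q C :: real
  assumes "0 \<le> q" "q < 1"
  shows "(\<lambda>k. if m \<le> k then C * q^(k-m) else 0) sums (C / (1 - q))"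
proof -
  have "(\<lambda>i. C * q^i) sums (C * (1 / (1 - q)))"
    by (rule sums_mult) (use assms geometric_sums[of q] in auto)
  then have "(\<lambda>i. (\<lambda>k. if m \<le> k then C * q^(k-m) else 0) (i + m)) sums (C / (1 - q))"
    by simp
  then show ?thesis by (subst (asm) sums_zero_iff_shift) auto
qed

lemma inner1:
  fixes a b :: real
  assumes "0 < a" "a < 1" "0 < b" "b < 1"
  shows "matmul (Mdown z b) (Mright u a) n n' =
    (if z \<le> n \<and> u \<le> n' then b^(2*z+max (n-z) (n'-u)-n) * a^(2*u+max (n-z) (n'-u)-n') / (1-a*b) else 0)"
proof -
  define m where "m = max (n-z) (n'-u)"
  define D where "D = b^(2*z+m-n) * a^(2*u+m-n')"
  have ab: "0 \<le> a*b" "a*b < 1" using assms mult_strict_mono[of a 1 b 1] by auto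
  have eq: "(\<lambda>k. Mdown z b n k * Mright u a k n') =
     (\<lambda>k. if z \<le> n \<and> u \<le> n' then (if m \<le> k then D * (a*b)^(k-m) else 0) else 0)"
  proof
    fix k
    show "Mdown z b n k * Mright u a k n' = (if z \<le> n \<and> u \<le> n' then (if m \<le> k then D * (a*b)^(k-m) else 0) else 0)"
    proof (cases "z \<le> n \<and> u \<le> n' \<and> m \<le> k")
      case True
      have e1: "2*z+k-n = (2*z+m-n) + (k-m)" using True unfolding m_def by auto
      have e2: "2*u+k-n' = (2*u+m-n') + (k-m)" using True unfolding m_def by auto
      have c1: "z \<le> n \<and> n \<le> z + k" "u \<le> n' \<and> n' \<le> u + k" using True unfolding m_def by auto
      have "Mdown z b n k * Mright u a k n' = b^(2*z+k-n) * a^(2*u+k-n')"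
        unfolding Mdown_def Mright_eq using c1 by simp
      also have "\<dots> = D * (a*b)^(k-m)"
        unfolding e1 e2 D_def power_add power_mult_distrib by simp
      finally show ?thesis using True by simp
    next
      case False then show ?thesis unfolding Mdown_def Mright_eq m_def by auto
    qed
  qed
  show ?thesis
  proof (cases "z \<le> n \<and> u \<le> n'")
    case True
    have "(\<lambda>k. Mdown z b n k * Mright u a k n') sums (D / (1 - a*b))"
      unfolding eq using True geom_shift[OF ab, of m D] by simp
    then show ?thesis unfolding matmul_def using True by (simp add: sums_iff D_def m_def)
  next
    case False
    then have "(\<lambda>k. if z \<le> n \<and> u \<le> n' then (if m \<le> k then D * (a*b)^(k-m) else 0) else 0) = (\<lambda>k. 0)"
      by auto
    then have "matmul (Mdown z b) (Mright u a) n n' = 0" unfolding matmul_def eq by simp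
    then show ?thesis by (simp only: if_not_P[OF False])
  qed
qed

lemma part2_sum:
  fixes a c :: real
  assumes "0 < a" "0 < c" "a * c < 1"
  shows "(\<lambda>j. if y \<le> N \<and> N \<le> y + j then c^j * a^(2*y+j-N) else 0) sums
          (if y \<le> N then c^(N-y) * a^y / (1 - a*c) else 0)"
proof (cases "y \<le> N")
  case True
  have ac: "0 \<le> a*c" "a*c < 1" using assms by auto
  have "(\<lambda>j. if y \<le> N \<and> N \<le> y + j then c^j * a^(2*y+j-N) else 0) =
        (\<lambda>j. if N - y \<le> j then (c^(N-y) * a^y) * (a*c)^(j-(N-y)) else 0)"
  proof
    fix j
    show "(if y \<le> N \<and> N \<le> y + j then c^j * a^(2*y+j-N) else 0) =
        (if N - y \<le> j then (c^(N-y) * a^y) * (a*c)^(j-(N-y)) else 0)"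
    proof (cases "N - y \<le> j")
      case T2: True
      have e1: "j = (N-y) + (j-(N-y))" using T2 by auto
      have e2: "2*y+j-N = y + (j-(N-y))" using T2 True by auto
      have "c^j * a^(2*y+j-N) = (c^(N-y) * a^y) * (a*c)^(j-(N-y))"
        by (subst e1, subst e2) (simp add: power_add power_mult_distrib)
      then show ?thesis using T2 True by auto
    qed (use True in auto)
  qed
  then show ?thesis using geom_shift[OF ac, of "N-y" "c^(N-y) * a^y"] True by simp
qed simp

lemma part2_fin:
  fixes a c :: real
  shows "(\<Sum>j\<in>{x..x+N}. c^j * a^(2*x+N-j)) = (a*c)^x * (\<Sum>y\<le>N. c^(N-y) * a^y)"
proof -
  have tw: "c^(x+N-y) * a^(2*x+N-(x+N-y)) = c^(N-y) * a^y * (a*c)^x" if "y \<le> N" for y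
  proof -
    have e1: "x+N-y = (N-y) + x" and e2: "2*x+N-(x+N-y) = y + x" using that by auto
    show ?thesis by (subst e2, subst e1) (simp add: power_add power_mult_distrib)
  qed
  have "(\<Sum>y\<le>N. c^(N-y) * a^y) * (a*c)^x = (\<Sum>j\<in>{x..x+N}. c^j * a^(2*x+N-j))"
    unfolding sum_distrib_right
    apply (rule sum.reindex_bij_witness[where i = "\<lambda>j. x + N - j" and j = "\<lambda>y. x + N - y"])
    using tw by auto
  then show ?thesis by (simp add: mult.commute)
qed

lemma exps:
  fixes x y z n n' :: nat
  assumes "y - x \<le> z" "z \<le> n" "x+z-y \<le> n'"
  shows "min x y + (2*(x+z-y)+max (n-z) (n'-(x+z-y))-n') = 2*x+n-((max x y + min (x+n) (y+n') - x)-z)"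
    "min x y + (2*z+max (n-z) (n'-(x+z-y))-n) = 2*y+n'-((max x y + min (x+n) (y+n') - x)-z)"
proof -
  have "x + z \<ge> y" using assms by auto
  then obtain u where u: "x + z = y + u" by (metis le_iff_add)
  have uu: "x+z-y = u" using u by simp
  show "min x y + (2*(x+z-y)+max (n-z) (n'-(x+z-y))-n') = 2*x+n-((max x y + min (x+n) (y+n') - x)-z)"
    unfolding uu using assms(2,3) u by (cases "x \<le> y"; cases "x+n \<le> y+n'"; simp add: max_def min_def uu; linarith)
  show "min x y + (2*z+max (n-z) (n'-(x+z-y))-n) = 2*y+n'-((max x y + min (x+n) (y+n') - x)-z)"
    unfolding uu using assms(2,3) u by (cases "x \<le> y"; cases "x+n \<le> y+n'"; simp add: max_def min_def uu; linarith)
qed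

lemma pw3: fixes a b :: real shows "(a*b)^p * (b^q * a^r) = a^(p+r) * b^(p+q)"
  by (simp add: power_add power_mult_distrib mult_ac)

lemma tw1:
  fixes a b :: real
  assumes "y - x \<le> z" "z \<le> n" "x+z-y \<le> n'"
  defines "C \<equiv> max x y + min (x+n) (y+n') - x"
  shows "(a*b)^min x y * (b^(2*z+max (n-z) (n'-(x+z-y))-n) * a^(2*(x+z-y)+max (n-z) (n'-(x+z-y))-n'))
     = a^(2*x+n-(C-z)) * b^(2*y+n'-(C-z))"
proof -
  have ea: "min x y + (2*(x+z-y)+max (n-z) (n'-(x+z-y))-n') = 2*x+n-(C-z)"
    unfolding C_def by (rule exps(1)[OF assms(1-3)])
  have eb: "min x y + (2*z+max (n-z) (n'-(x+z-y))-n) = 2*y+n'-(C-z)"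
    unfolding C_def by (rule exps(2)[OF assms(1-3)])
  have "(a*b)^min x y * (b^(2*z+max (n-z) (n'-(x+z-y))-n) * a^(2*(x+z-y)+max (n-z) (n'-(x+z-y))-n'))
     = a^(min x y + (2*(x+z-y)+max (n-z) (n'-(x+z-y))-n')) * b^(min x y + (2*z+max (n-z) (n'-(x+z-y))-n))"
    by (rule pw3)
  also have "\<dots> = a^(2*x+n-(C-z)) * b^(2*y+n'-(C-z))" by (simp only: ea eb)
  finally show ?thesis .
qed

lemma bij1:
  fixes x y z n n' :: nat
  defines "C \<equiv> max x y + min (x+n) (y+n') - x"
  shows "y - x \<le> z \<and> z \<le> n \<and> x+z-y \<le> n' \<Longrightarrow> C - (C - z) = z \<and> max x y \<le> C - z \<and> C - z \<le> min (x+n) (y+n')"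
    "max x y \<le> k \<and> k \<le> min (x+n) (y+n') \<Longrightarrow> C - (C - k) = k \<and> y - x \<le> C - k \<and> C - k \<le> n \<and> x + (C-k) - y \<le> n'"
  unfolding C_def by (cases "x \<le> y"; cases "x+n \<le> y+n'"; simp add: max_def min_def; linarith)+


lemma part23:
  fixes a c :: real
  assumes "0 < a" "0 < c" "a * c < 1"
  shows "summable (\<lambda>y. \<Sum>j. c^j * Mright y a j N) \<and>
    (\<Sum>j. c^j * Mright x a N j) = (a*c)^x * (1-a*c) * (\<Sum>y. \<Sum>j. c^j * Mright y a j N)"
proof -
  define H where "H y = (if y \<le> N then c^(N-y) * a^y / (1 - a*c) else 0)" for y
  have G: "(\<Sum>j. c^j * Mright y a j N) = H y" for y
  proof -
    have "(\<lambda>j. c^j * Mright y a j N) = (\<lambda>j. if y \<le> N \<and> N \<le> y + j then c^j * a^(2*y+j-N) else 0)"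
      by (auto simp: Mright_eq)
    then show ?thesis using part2_sum[OF assms, of y N] unfolding H_def by (simp add: sums_iff)
  qed
  have H0: "H y = 0" if "y \<notin> {..N}" for y using that by (simp add: H_def)
  have smH: "summable H" by (rule summable_finite[of "{..N}"]) (use H0 in auto)
  have sH: "suminf H = (\<Sum>y\<le>N. c^(N-y) * a^y / (1 - a*c))"
    by (subst suminf_finite[of "{..N}"]) (auto simp: H_def)
  have L: "(\<Sum>j. c^j * Mright x a N j) = (\<Sum>j\<in>{x..x+N}. c^j * a^(2*x+N-j))"
    by (subst suminf_finite[of "{x..x+N}"]) (auto simp: Mright_eq)
  have ne: "a*c \<noteq> 1" using assms by simp
  show ?thesis unfolding G using smH
    by (simp add: sH L part2_fin sum_divide_distrib[symmetric] ne)
qed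

theorem proposition2p21:
  fixes a b c1 c2 :: real and x y :: nat
  assumes "0 < a" "a < 1" "0 < b" "b < 1" "0 < c1" "0 < c2"
    and "a * c1 < 1" "a * c2 < 1"
  defines "w \<equiv> (\<lambda>n. c1 ^ n)" and "v \<equiv> (\<lambda>n. c2 ^ n)"
  shows "(\<forall>n n'. (\<lambda>z. matmul (Mdown z b) (Mright (x + z - y) a) n n') summable_on {y - x..}
              \<and> matmul (Mright x a) (Mdown y b) n n'
                = (a * b) ^ min x y * (1 - a * b) *
                  (\<Sum>\<^sub>\<infinity>z\<in>{y - x..}. matmul (Mdown z b) (Mright (x + z - y) a) n n'))
    \<and> (\<forall>n'. summable (\<lambda>y. vecmat w (Mright y a) n')
              \<and> vecmat w (Mdown x a) n'
                = (a * c1) ^ x * (1 - a * c1) * (\<Sum>y. vecmat w (Mright y a) n'))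
    \<and> (\<forall>n. summable (\<lambda>y. matvec (Mdown y a) v n)
              \<and> matvec (Mright x a) v n
                = (a * c2) ^ x * (1 - a * c2) * (\<Sum>y. matvec (Mdown y a) v n))"
  proof -
  have ab: "0 \<le> a*b" "a*b < 1" using assms mult_strict_mono[of a 1 b 1] by auto
  have P1: "\<forall>n n'. (\<lambda>z. matmul (Mdown z b) (Mright (x + z - y) a) n n') summable_on {y - x..}
              \<and> matmul (Mright x a) (Mdown y b) n n'
                = (a * b) ^ min x y * (1 - a * b) *
                  (\<Sum>\<^sub>\<infinity>z\<in>{y - x..}. matmul (Mdown z b) (Mright (x + z - y) a) n n')"
  proof (intro allI)
    fix n n' :: nat
    define F where "F z = matmul (Mdown z b) (Mright (x+z-y) a) n n'" for z
    define M where "M z = max (n-z) (n'-(x+z-y))" for z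
    define D where "D z = b^(2*z+M z-n) * a^(2*(x+z-y)+M z-n')" for z
    define S where "S = {z. y-x \<le> z \<and> z \<le> n \<and> x+z-y \<le> n'}"
    define C where "C = max x y + min (x+n) (y+n') - x"
    define T where "T = {k. max x y \<le> k \<and> k \<le> min (x+n) (y+n')}"
    have finS: "finite S" by (rule finite_subset[of _ "{..n}"]) (auto simp: S_def)
    have finT: "finite T" by (rule finite_subset[of _ "{..x+n}"]) (auto simp: T_def)
    have FS: "F z = D z / (1-a*b)" if "z \<in> S" for z
      using that inner1[OF assms(1-4), of z "x+z-y" n n'] unfolding F_def D_def M_def S_def by simp
    have F0: "F z = 0" if "z \<in> {y-x..} - S" for z
      using that inner1[OF assms(1-4), of z "x+z-y" n n'] unfolding F_def S_def by auto
    have "F summable_on S \<longleftrightarrow> F summable_on {y-x..}"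
      by (rule summable_on_cong_neutral) (use F0 in \<open>auto simp: S_def\<close>)
    then have sm: "F summable_on {y-x..}" using finS by simp
    have "infsum F S = infsum F {y-x..}"
      by (rule infsum_cong_neutral) (use F0 in \<open>auto simp: S_def\<close>)
    then have inf: "infsum F {y-x..} = sum F S" using finS by simp
    have lhs: "matmul (Mright x a) (Mdown y b) n n' = (\<Sum>k\<in>T. a^(2*x+n-k) * b^(2*y+n'-k))"
      unfolding matmul_def
      by (subst suminf_finite[OF finT]) (auto simp: T_def Mdown_def Mright_eq intro!: sum.cong)
    have re: "(\<Sum>z\<in>S. (a*b)^min x y * D z) = (\<Sum>k\<in>T. a^(2*x+n-k) * b^(2*y+n'-k))"
    proof (rule sum.reindex_bij_witness[where i = "\<lambda>k. C - k" and j = "\<lambda>z. C - z"])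
      fix z assume "z \<in> S"
      then have zz: "y - x \<le> z \<and> z \<le> n \<and> x+z-y \<le> n'" by (simp add: S_def)
      show "C - (C - z) = z" using bij1(1)[OF zz] unfolding C_def by simp
      show "C - z \<in> T" using bij1(1)[OF zz] unfolding C_def T_def by simp
      show "a^(2*x+n-(C-z)) * b^(2*y+n'-(C-z)) = (a*b)^min x y * D z"
        using tw1[of y x z n n' a b] zz unfolding D_def M_def C_def by simp
    next
      fix k assume "k \<in> T"
      then have kk: "max x y \<le> k \<and> k \<le> min (x+n) (y+n')" by (simp add: T_def)
      show "C - (C - k) = k" using bij1(2)[OF kk] unfolding C_def by simp
      show "C - k \<in> S" using bij1(2)[OF kk] unfolding C_def S_def by simp
    qed
    have ne: "1 - a*b \<noteq> 0" using ab by simp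
    have "(a * b) ^ min x y * (1 - a * b) * infsum F {y-x..} = (\<Sum>z\<in>S. (a*b)^min x y * D z)"
      unfolding inf using ne by (simp add: FS sum_distrib_left sum_divide_distrib)
    then show "F summable_on {y - x..} \<and> matmul (Mright x a) (Mdown y b) n n' =
        (a * b) ^ min x y * (1 - a * b) * infsum F {y-x..}"
      using sm lhs re by simp
  qed
  have P2: "\<forall>n'. summable (\<lambda>y. vecmat w (Mright y a) n')
              \<and> vecmat w (Mdown x a) n'
                = (a * c1) ^ x * (1 - a * c1) * (\<Sum>y. vecmat w (Mright y a) n')"
    unfolding vecmat_def w_def Mdown_def using part23[OF assms(1) assms(5) assms(7)] by blast
  have P3: "\<forall>n. summable (\<lambda>y. matvec (Mdown y a) v n)
              \<and> matvec (Mright x a) v n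
                = (a * c2) ^ x * (1 - a * c2) * (\<Sum>y. matvec (Mdown y a) v n)"
    unfolding matvec_def v_def Mdown_def using part23[OF assms(1) assms(6) assms(8)]
    by (simp add: mult.commute)
  show ?thesis using P1 P2 P3 by blast
qed

end
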